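(* Let $\alpha\in\mathbb{R}$, let $p$ be a positive integer, $a\in\mathbb{R}$, and let $f$ be a real function defined on $\mathbb{N}_{a-p+1}=\{a-p+1,a-p+2,\dots\}$. Then for all $t\in\mathbb{N}_{a+p}$, $$\nabla_a^{-\alpha}\nabla^p f(t)=\nabla^p\nabla_a^{-\alpha}f(t)-\sum_{k=0}^{p-1}\frac{(t-a)^{\overline{\alpha-p+k}}}{\Gamma(\alpha+k-p+1)}\nabla^k f(a).$$
   Context: Notation: $\mathbb{N}_c=\{c,c+1,\dots\}$, $\rho(t)=t-1$, $\nabla g(t)=g(t)-g(t-1)$, $\nabla^m=\nabla(\nabla^{m-1})$. Rising factorial: $t^{\overline{\beta}}=\Gamma(t+\beta)/\Gamma(t)$ with $0^{\overline{\beta}}=0$; the reciprocal of $\Gamma$ at a pole is taken to be $0$. For $\gamma>0$ the nabla left fractional sum is $\nabla_a^{-\gamma}g(t)=\frac{1}{\Gamma(\gamma)}\sum_{s=a+1}^{t}(t-\rho(s))^{\overline{\gamma-1}}g(s)$, where a sum with upper limit smaller than lower limit is $0$ (so these sums vanish for $t\le a$). For $\beta>0$, let $n=[\beta]+1$ with $[\beta]$ the greatest integer strictly less than $\beta$; the nabla left fractional difference is $\nabla_a^{\beta}g(t)=\nabla^n\nabla_a^{-(n-\beta)}g(t)$ (the operator of order $0$ being the identity). In the claim, for $\alpha<0$ the symbol $\nabla_a^{-\alpha}$ means the nabla left fractional difference of order $-\alpha>0$, and for $\alpha=0$ it is the identity. *)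

theory Defs
  imports "HOL-Analysis.Analysis"
begin

text \<open>Rising factorial t^(beta) = Gamma(t+beta)/Gamma(t), with 0^(beta) = 0 and
  1/Gamma at a pole taken to be 0 (this is rGamma).\<close>
definition rising_fact :: "real \<Rightarrow> real \<Rightarrow> real" where
  "rising_fact t \<beta> = (if t = 0 then 0 else Gamma (t + \<beta>) * rGamma t)"

definition nabla :: "(real \<Rightarrow> real) \<Rightarrow> real \<Rightarrow> real" where
  "nabla g t = g t - g (t - 1)"

text \<open>Nabla left fractional sum of order gamma > 0 based at a:
  sum over s = a+1, ..., t (empty when t < a+1).\<close>
definition nabla_frac_sum :: "real \<Rightarrow> real \<Rightarrow> (real \<Rightarrow> real) \<Rightarrow> real \<Rightarrow> real" where
  "nabla_frac_sum a \<gamma> g t =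
     (\<Sum>j\<in>{1..nat \<lfloor>t - a\<rfloor>}. rising_fact (t - (a + real j - 1)) (\<gamma> - 1) * g (a + real j))
     / Gamma \<gamma>"

text \<open>Nabla left fractional difference of order beta > 0: with n = [beta] + 1 = ceiling beta,
  apply nabla^n to the fractional sum of order n - beta (identity if that order is 0).\<close>
definition nabla_frac_diff :: "real \<Rightarrow> real \<Rightarrow> (real \<Rightarrow> real) \<Rightarrow> real \<Rightarrow> real" where
  "nabla_frac_diff a \<beta> g =
     (nabla ^^ nat \<lceil>\<beta>\<rceil>)
       (if real_of_int \<lceil>\<beta>\<rceil> - \<beta> = 0 then g else nabla_frac_sum a (real_of_int \<lceil>\<beta>\<rceil> - \<beta>) g)"

definition nabla_frac :: "real \<Rightarrow> real \<Rightarrow> (real \<Rightarrow> real) \<Rightarrow> real \<Rightarrow> real" where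
  "nabla_frac a \<nu> g =
     (if \<nu> > 0 then nabla_frac_diff a \<nu> g
      else if \<nu> < 0 then nabla_frac_sum a (- \<nu>) g else g)"

end

theory Submission imports Defs begin

definition hh :: "real \<Rightarrow> real \<Rightarrow> real" where
  "hh m r = rising_fact m r * rGamma (r + 1)"

lemma rf_nonpos: "m \<in> \<int> \<Longrightarrow> m \<le> 0 \<Longrightarrow> rising_fact m r = 0"
proof -
  assume "m \<in> \<int>" "m \<le> 0"
  hence "m \<in> \<int>\<^sub>\<le>\<^sub>0" by (simp add: nonpos_Ints_altdef)
  thus ?thesis by (simp add: rising_fact_def rGamma_eq_zero_iff)
qed

lemma hh_nonpos: "m \<in> \<int> \<Longrightarrow> m \<le> 0 \<Longrightarrow> hh m r = 0"
  by (simp add: hh_def rf_nonpos)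

lemma hh_Suc: "hh (real (Suc N)) r =
   (if r + 1 \<in> \<int>\<^sub>\<le>\<^sub>0 then 0 else pochhammer (r+1) N / fact N)"
proof (cases "r + 1 \<in> \<int>\<^sub>\<le>\<^sub>0")
  case True thus ?thesis by (simp add: hh_def rGamma_eq_zero_iff)
next
  case False
  have g: "Gamma (1 + real N) = fact N"
    using Gamma_fact[of N] by simp
  have "Gamma (real (Suc N) + r) = pochhammer (r+1) N * Gamma (r+1)"
    using pochhammer_Gamma[OF False, of N] False
    by (simp add: Gamma_eq_zero_iff field_simps)
  moreover have "Gamma (r+1) * rGamma (r+1) = 1"
    using False by (simp add: rGamma_inverse_Gamma Gamma_eq_zero_iff)
  moreover have "Gamma (r+1) \<noteq> 0" using False by (simp add: Gamma_eq_zero_iff)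
  ultimately show ?thesis using False
    by (simp add: hh_def rising_fact_def rGamma_inverse_Gamma g add.commute field_simps)
qed

lemma H:
  fixes m :: int
  assumes "m \<ge> 2 \<or> r \<notin> \<int>"
  shows "hh (of_int m) r - hh (of_int m - 1) r = hh (of_int m) (r - 1)"
proof -
  consider "m \<le> 0" | "m = 1" | N where "m = int N + 2" 
  proof -
    have "m \<le> 0 \<or> m = 1 \<or> m = int (nat (m - 2)) + 2" by linarith
    thus ?thesis using that by blast
  qed
  then show ?thesis
  proof cases
    case 1
    have "hh (of_int m) r = 0" "hh (of_int m - 1) r = 0" "hh (of_int m) (r-1) = 0"
      using 1 by (auto intro!: hh_nonpos)
    thus ?thesis by simp
  next
    case 2
    with assms have r: "r \<notin> \<int>" by auto
    have r1: "r + 1 \<notin> \<int>\<^sub>\<le>\<^sub>0" "r \<notin> \<int>\<^sub>\<le>\<^sub>0"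
    proof -
      have "r + 1 \<notin> \<int>" using r by (metis Ints_1 Ints_diff add_diff_cancel_right')
      thus "r + 1 \<notin> \<int>\<^sub>\<le>\<^sub>0" "r \<notin> \<int>\<^sub>\<le>\<^sub>0" using r by (auto simp: not_in_Ints_imp_not_in_nonpos_Ints)
    qed
    have "hh (real (Suc 0)) r = 1" "hh (real (Suc 0)) (r - 1) = 1"
      using hh_Suc[of 0 r] hh_Suc[of 0 "r-1"] r1 by auto
    moreover have "hh 0 r = 0" by (simp add: hh_def rising_fact_def)
    ultimately show ?thesis using 2 by simp
  next
    case 3
    have e1: "of_int m = 2 + real N" "of_int m - 1 = 1 + real N" using 3 by auto
    have hs: "\<And>x. hh (2 + real N) x = (if x + 1 \<in> \<int>\<^sub>\<le>\<^sub>0 then 0 else pochhammer (x+1) (Suc N) / fact (Suc N))"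
             "\<And>x. hh (1 + real N) x = (if x + 1 \<in> \<int>\<^sub>\<le>\<^sub>0 then 0 else pochhammer (x+1) N / fact N)"
      using hh_Suc[of N] hh_Suc[of "Suc N"] by (simp_all add: add_ac)
    have q: "\<And>x. hh (of_int m - 1) x = hh (1+real N) x" by (simp only: e1(2))
    have q2: "\<And>x. hh (of_int m) x = hh (2+real N) x" by (simp only: e1(1))
    show ?thesis
    proof (cases "r + 1 \<in> \<int>\<^sub>\<le>\<^sub>0")
      case True
      hence "r \<in> \<int>\<^sub>\<le>\<^sub>0" 
        by (rule plus_one_in_nonpos_Ints_imp)
      moreover have "rGamma (r+1) = 0" using True by (simp add: rGamma_eq_zero_iff)
      moreover have "rGamma r = 0" using True by (simp add: rGamma_eq_zero_iff plus_one_in_nonpos_Ints_imp)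
      ultimately show ?thesis by (simp add: hh_def)
    next
      case F: False
      show ?thesis
      proof (cases "r \<in> \<int>\<^sub>\<le>\<^sub>0")
        case True
        have "r = 0"
        proof -
          obtain k where k: "r = of_int k" "k \<le> 0" using True by (auto elim!: nonpos_Ints_cases)
          have "\<not> (k + 1 \<le> 0)" using F k nonpos_Ints_of_int[of "k+1"] by auto
          thus ?thesis using k by simp
        qed
        thus ?thesis unfolding q q2 hs by (simp flip: pochhammer_fact)
      next
        case False
        have "pochhammer (r + 1) (Suc N) / fact (Suc N) - pochhammer (r + 1) N / fact N
              = pochhammer r (Suc N) / fact (Suc N)"
        proof -
          have a1: "pochhammer (r + 1) (Suc N) = (r + 1 + real N) * pochhammer (r + 1) N"
            by (rule pochhammer_rec')
          have a2: "pochhammer r (Suc N) = r * pochhammer (r + 1) N" by (rule pochhammer_rec)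
          have a3: "fact (Suc N) = (real N + 1) * (fact N :: real)" by simp
          have "fact N \<noteq> (0::real)" "real N + 1 \<noteq> 0" by simp_all
          then show ?thesis unfolding a1 a2 a3 by (simp add: divide_simps) (simp add: algebra_simps)
        qed
        thus ?thesis using F False unfolding q q2 hs by simp
      qed
    qed
  qed
qed

lemma S_nat: "nabla_frac_sum a \<nu> g (a + real m) =
   (\<Sum>i<m. rising_fact (real m - real i) (\<nu> - 1) * g (a + real i + 1)) / Gamma \<nu>"
  unfolding nabla_frac_sum_def by (simp add: sum.atLeast1_atMost_eq add_ac)

lemma S_nonpos: "m \<le> 0 \<Longrightarrow> nabla_frac_sum a \<nu> g (a + of_int m) = 0"
  unfolding nabla_frac_sum_def by simp

lemma P1:
  fixes m :: int
  shows "nabla_frac_sum a \<nu> (nabla g) (a + of_int m) =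
     nabla (nabla_frac_sum a \<nu> g) (a + of_int m) - hh (of_int m) (\<nu> - 1) * g a"
proof (cases "m \<le> 0")
  case True
  have "a + of_int m - 1 = a + of_int (m - 1)" by simp
  hence "nabla_frac_sum a \<nu> g (a + of_int m - 1) = 0" using True S_nonpos[of "m-1" a \<nu> g] by (simp only: of_int_diff of_int_1 add_diff_eq)
  thus ?thesis using True
    by (simp add: nabla_def S_nonpos hh_nonpos)
next
  case False
  then obtain M where M: "m = int (Suc M)" by (metis gr0_implies_Suc not_le pos_int_cases)
  define w where "w = (\<lambda>x. rising_fact x (\<nu> - 1))"
  have e: "a + of_int m = a + real (Suc M)" "a + of_int m - 1 = a + real M" using M by simp_all
  define A where "A = (\<Sum>i<Suc M. w (real (Suc M) - real i) * g (a + real i + 1))"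
  define B where "B = (\<Sum>i<Suc M. w (real (Suc M) - real i) * g (a + real i))"
  define C where "C = (\<Sum>i<M. w (real M - real i) * g (a + real i + 1))"
  have L: "nabla_frac_sum a \<nu> (nabla g) (a + of_int m) = (A - B) / Gamma \<nu>"
    unfolding e S_nat A_def B_def w_def
    by (simp add: nabla_def algebra_simps sum_subtractf)
  have R: "nabla (nabla_frac_sum a \<nu> g) (a + of_int m) = (A - C) / Gamma \<nu>"
    unfolding nabla_def e S_nat A_def C_def w_def by (simp add: diff_divide_distrib S_nat)
  have BC: "B = w (real (Suc M)) * g a + C"
    unfolding B_def C_def by (subst sum.lessThan_Suc_shift) (simp add: add_ac)
  have hv: "hh (of_int m) (\<nu> - 1) = w (real (Suc M)) * rGamma \<nu>"
    using M by (simp add: hh_def w_def)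
  show ?thesis unfolding L R hv BC
    by (simp add: rGamma_inverse_Gamma divide_inverse algebra_simps)
qed

lemma SUMP:
  fixes m :: int
  assumes "m \<ge> int p \<or> \<nu> \<notin> \<int>"
  shows "nabla_frac_sum a \<nu> ((nabla^^p) f) (a + of_int m) =
     (nabla^^p) (nabla_frac_sum a \<nu> f) (a + of_int m)
     - (\<Sum>k<p. hh (of_int m) (\<nu> - real p + real k) * (nabla^^k) f a)"
  using assms
proof (induction p arbitrary: m)
  case 0 show ?case by simp
next
  case (Suc p)
  define S where "S = nabla_frac_sum a \<nu>"
  define c where "c = (\<lambda>k. (nabla^^k) f a)"
  have c1: "m \<ge> int p \<or> \<nu> \<notin> \<int>" "m - 1 \<ge> int p \<or> \<nu> \<notin> \<int>" using Suc.prems by auto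
  have pt: "a + of_int m - 1 = a + of_int (m-1)" by simp
  have IH1: "S ((nabla^^p) f) (a + of_int m) = (nabla^^p) (S f) (a + of_int m)
     - (\<Sum>k<p. hh (of_int m) (\<nu> - real p + real k) * c k)"
    using Suc.IH[OF c1(1)] unfolding S_def c_def .
  have IH2: "S ((nabla^^p) f) (a + of_int m - 1) = (nabla^^p) (S f) (a + of_int m - 1)
     - (\<Sum>k<p. hh (of_int m - 1) (\<nu> - real p + real k) * c k)"
    using Suc.IH[OF c1(2)] unfolding S_def c_def pt by simp
  have Hk: "hh (of_int m) (\<nu> - real p + real k) - hh (of_int m - 1) (\<nu> - real p + real k)
        = hh (of_int m) (\<nu> - real (Suc p) + real k)" if k: "k < p" for k
  proof -
    have "m \<ge> 2 \<or> \<nu> - real p + real k \<notin> \<int>"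
    proof (cases "\<nu> \<in> \<int>")
      case True thus ?thesis using Suc.prems k by auto
    next
      case False
      have "\<nu> - real p + real k \<notin> \<int>"
      proof
        assume "\<nu> - real p + real k \<in> \<int>"
        hence "(\<nu> - real p + real k) + real p - real k \<in> \<int>" by (intro Ints_diff Ints_add) auto
        thus False using False by simp
      qed
      thus ?thesis by simp
    qed
    from H[OF this] show ?thesis by (simp add: algebra_simps)
  qed
  have "S ((nabla^^Suc p) f) (a + of_int m) = nabla (S ((nabla^^p) f)) (a + of_int m)
          - hh (of_int m) (\<nu> - 1) * c p"
    unfolding S_def c_def by (simp add: P1)
  also have "\<dots> = (nabla^^Suc p) (S f) (a + of_int m)
       - ((\<Sum>k<p. (hh (of_int m) (\<nu> - real p + real k) - hh (of_int m - 1) (\<nu> - real p + real k)) * c k)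
          + hh (of_int m) (\<nu> - 1) * c p)"
    unfolding nabla_def[of "S ((nabla^^p) f)"] IH1 IH2
    by (simp add: nabla_def sum_subtractf left_diff_distrib)
  also have "(\<Sum>k<p. (hh (of_int m) (\<nu> - real p + real k) - hh (of_int m - 1) (\<nu> - real p + real k)) * c k)
     = (\<Sum>k<p. hh (of_int m) (\<nu> - real (Suc p) + real k) * c k)"
    by (rule sum.cong) (simp_all add: Hk)
  also have "(\<Sum>k<p. hh (of_int m) (\<nu> - real (Suc p) + real k) * c k) + hh (of_int m) (\<nu> - 1) * c p
      = (\<Sum>k<Suc p. hh (of_int m) (\<nu> - real (Suc p) + real k) * c k)"
    by simp
  finally show ?case unfolding S_def c_def .
qed

lemma NS: "(nabla^^Suc n) g x = (nabla^^n) g x - (nabla^^n) g (x - 1)"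
  by (simp add: nabla_def)

lemma NL1: "(nabla^^n) (\<lambda>s. u s - v s) = (\<lambda>s. (nabla^^n) u s - (nabla^^n) v s)"
  by (induction n) (simp_all add: nabla_def algebra_simps)

lemma NL2: "(nabla^^n) (\<lambda>s. u s * c) = (\<lambda>s. (nabla^^n) u s * c)"
  by (induction n) (simp_all add: nabla_def algebra_simps)

lemma NL3: "(nabla^^n) (\<lambda>s. \<Sum>k\<in>K. u k s) = (\<lambda>s. \<Sum>k\<in>K. (nabla^^n) (u k) s)"
  by (induction n) (simp_all add: nabla_def sum_subtractf)

lemma NL4:
  assumes "\<And>j::int. phi (a + of_int j) = psi (a + of_int j)"
  shows "(nabla^^n) phi (a + of_int j) = (nabla^^n) psi (a + of_int j)"
proof (induction n arbitrary: j)
  case 0 thus ?case using assms by simp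
next
  case (Suc n)
  have pt: "a + of_int j - 1 = a + of_int (j-1)" by simp
  show ?case using Suc.IH[of j] Suc.IH[of "j-1"] by (simp add: nabla_def pt del: of_int_diff)
qed

lemma NH:
  assumes "r \<notin> \<int>"
  shows "(nabla^^n) (\<lambda>s. hh (s - a) r) (a + of_int j) = hh (of_int j) (r - real n)"
proof (induction n arbitrary: j)
  case 0 thus ?case by simp
next
  case (Suc n)
  have pt: "a + of_int j - 1 = a + of_int (j-1)" by simp
  have ni: "r - real n \<notin> \<int>"
  proof
    assume "r - real n \<in> \<int>"
    hence "r - real n + real n \<in> \<int>" by (intro Ints_add) auto
    thus False using assms by simp
  qed
  have "(nabla^^Suc n) (\<lambda>s. hh (s - a) r) (a + of_int j)
      = hh (of_int j) (r - real n) - hh (of_int j - 1) (r - real n)"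
    unfolding NS pt Suc.IH by simp
  also have "\<dots> = hh (of_int j) (r - real n - 1)" using H[of j "r - real n"] ni by simp
  finally show ?case by (simp add: algebra_simps)
qed

lemma funpow_comm: "(nabla^^n) ((nabla^^p) f) = (nabla^^p) ((nabla^^n) f)"
  by (metis add.commute comp_apply funpow_add)

theorem theorem2p7:
  fixes \<alpha> a :: real and p :: nat and f :: "real \<Rightarrow> real" and t :: real
  assumes "p \<ge> 1"
    and "t \<in> {a + real p + real n | n. n \<in> (UNIV :: nat set)}"
  shows "nabla_frac a (- \<alpha>) ((nabla ^^ p) f) t =
           (nabla ^^ p) (nabla_frac a (- \<alpha>) f) t
           - (\<Sum>k<p. rising_fact (t - a) (\<alpha> - real p + real k)
                       * rGamma (\<alpha> + real k - real p + 1) * (nabla ^^ k) f a)"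
proof -
  obtain n where n: "t = a + real p + real n" using assms(2) by auto
  define M :: int where "M = int p + int n"
  have tM: "t = a + of_int M" "t - a = of_int M" unfolding M_def n by simp_all
  define c where "c = (\<lambda>k. (nabla^^k) f a)"
  have hhconv: "hh (of_int M) (\<alpha> - real p + real k) * c k =
      rising_fact (t - a) (\<alpha> - real p + real k) * rGamma (\<alpha> + real k - real p + 1) * (nabla ^^ k) f a" for k
    unfolding hh_def c_def tM by (simp add: algebra_simps)
  consider "\<alpha> > 0" | "\<alpha> = 0" | "\<alpha> < 0" by linarith
  then show ?thesis
  proof cases
    case 1
    have nf: "\<And>g. nabla_frac a (- \<alpha>) g = nabla_frac_sum a \<alpha> g"
      using 1 by (simp add: nabla_frac_def)
    have "M \<ge> int p" unfolding M_def by simp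
    from SUMP[of p M \<alpha> a f, OF disjI1[OF this]] show ?thesis
      unfolding nf tM(1) [symmetric] using hhconv unfolding c_def by simp
  next
    case 2
    have z: "rGamma (\<alpha> + real k - real p + 1) = 0" if "k < p" for k
    proof -
      have e: "\<alpha> + real k - real p + 1 = of_int (int k - int p + 1)" using 2 by simp
      show ?thesis unfolding e rGamma_of_int using that by simp
    qed
    show ?thesis using 2 z by (simp add: nabla_frac_def funpow_comm)
  next
    case 3
    define \<beta> where "\<beta> = - \<alpha>"
    have b: "\<beta> > 0" using 3 by (simp add: \<beta>_def)
    define N where "N = nat \<lceil>\<beta>\<rceil>"
    have N: "real N = real_of_int \<lceil>\<beta>\<rceil>" unfolding N_def using b by simp
    have nf: "\<And>g. nabla_frac a (- \<alpha>) g = (nabla ^^ N)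
       (if real_of_int \<lceil>\<beta>\<rceil> - \<beta> = 0 then g else nabla_frac_sum a (real_of_int \<lceil>\<beta>\<rceil> - \<beta>) g)"
      using b unfolding \<beta>_def N_def by (simp add: nabla_frac_def nabla_frac_diff_def)
    show ?thesis
    proof (cases "real_of_int \<lceil>\<beta>\<rceil> - \<beta> = 0")
      case True
      have z: "rGamma (\<alpha> + real k - real p + 1) = 0" if "k < p" for k
      proof -
        have "\<alpha> + real k - real p + 1 = of_int (- \<lceil>\<beta>\<rceil> + int k - int p + 1)"
          using True unfolding \<beta>_def by simp
        moreover have "- \<lceil>\<beta>\<rceil> + int k - int p + 1 \<le> 0" using that b by linarith
        ultimately show ?thesis by (simp only: rGamma_of_int) simp
      qed
      show ?thesis unfolding nf using True z by (simp add: funpow_comm)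
    next
      case False
      define \<nu> where "\<nu> = real_of_int \<lceil>\<beta>\<rceil> - \<beta>"
      have nuI: "\<nu> \<notin> \<int>"
      proof
        assume "\<nu> \<in> \<int>"
        hence "real_of_int \<lceil>\<beta>\<rceil> - \<nu> \<in> \<int>" by (intro Ints_diff) auto
        hence "\<beta> \<in> \<int>" unfolding \<nu>_def by simp
        then obtain z where "\<beta> = of_int z" by (auto elim: Ints_cases)
        thus False using False by simp
      qed
      have nf2: "\<And>g. nabla_frac a (- \<alpha>) g = (nabla ^^ N) (nabla_frac_sum a \<nu> g)"
        unfolding nf \<nu>_def using False by simp
      define psi where "psi = (\<lambda>s. (nabla^^p) (nabla_frac_sum a \<nu> f) s
           - (\<Sum>k<p. hh (s - a) (\<nu> - real p + real k) * c k))"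
      have agree: "nabla_frac_sum a \<nu> ((nabla^^p) f) (a + of_int j) = psi (a + of_int j)" for j :: int
        unfolding psi_def c_def using SUMP[of p j \<nu> a f] nuI by simp
      have rk: "\<nu> - real p + real k \<notin> \<int>" for k
      proof
        assume "\<nu> - real p + real k \<in> \<int>"
        hence "(\<nu> - real p + real k) + real p - real k \<in> \<int>" by (intro Ints_diff Ints_add) auto
        thus False using nuI by simp
      qed
      have "nabla_frac a (- \<alpha>) ((nabla ^^ p) f) t = (nabla^^N) psi (a + of_int M)"
        unfolding nf2 tM(1) by (rule NL4[where phi="nabla_frac_sum a \<nu> ((nabla^^p) f)" and psi=psi and a=a, OF agree])
      also have "\<dots> = (nabla^^N) ((nabla^^p) (nabla_frac_sum a \<nu> f)) (a + of_int M)
          - (\<Sum>k<p. (nabla^^N) (\<lambda>s. hh (s - a) (\<nu> - real p + real k)) (a + of_int M) * c k)"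
        unfolding psi_def NL1 NL3 NL2 ..
      also have "\<dots> = (nabla^^p) (nabla_frac a (- \<alpha>) f) t
          - (\<Sum>k<p. hh (of_int M) (\<nu> - real p + real k - real N) * c k)"
        unfolding NH[OF rk] nf2 tM(1) funpow_comm ..
      also have "(\<Sum>k<p. hh (of_int M) (\<nu> - real p + real k - real N) * c k)
         = (\<Sum>k<p. hh (of_int M) (\<alpha> - real p + real k) * c k)"
        unfolding N \<nu>_def \<beta>_def by (simp add: algebra_simps)
      finally show ?thesis using hhconv by simp
    qed
  qed
qed

end
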